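(* Let $T_1,T_2\in\mathcal{T}_n$ be binary phylogenetic trees. Let $G$ be the undirected multigraph with vertex set $\{1,\dots,2n-2\}$ and edge multiset $M(T_1)\sqcup M(T_2)$ (each member of $M(T_i)$ being a $2$-element set, viewed as an edge), and let $C$ be the set of connected components of $G$. Then $\mathit{TD}(T_1,T_2)=n-1-|C|$.
   Context: A phylogenetic tree is a finite rooted tree (arcs directed away from the root) with no node of outdegree $1$, whose leaves are injectively labeled; it is binary if every internal (non-leaf) node has exactly $2$ children. $\mathcal{T}_n$ denotes the set of phylogenetic trees with $n$ leaves labeled $1,\dots,n$, up to label-preserving isomorphism; $\mathcal{L}(T)$ is the set of leaves. The height of a node is the length of a longest directed path from it to a leaf. The bottom-up ordering of $T=(V,E)\in\mathcal{T}_n$ is the unique injective map $\ell:V\to\{1,\dots,|V|\}$ such that: (a) for a leaf $v$, $\ell(v)$ is its label; (b) if $\mathrm{height}(u)<\mathrm{height}(v)$ then $\ell(u)<\ell(v)$; (c) if $0<\mathrm{height}(u)=\mathrm{height}(v)$ and $\min\{\ell(x): x \text{ child of } u\}<\min\{\ell(x): x\text{ child of } v\}$ then $\ell(u)<\ell(v)$. The matching representation is $M(T)=\{\ell(\mathrm{children}(u)) : u\in V\setminus\mathcal{L}(T)\}$, a partition of $\{1,\dots,|V|-1\}$. For a subset $S=\{i_1<\dots<i_k\}$ with $k\ge 2$, $\kappa(S)$ is the cyclic permutation $(i_1,\dots,i_k)$. The matching permutation is $\pi(T)=\prod_{u\in V\setminus\mathcal{L}(T)}\kappa(\ell(\mathrm{children}(u)))$,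 regarded as an element of $\mathfrak{S}_{2n-2}$ fixing $|V|,\dots,2n-2$. Permutations are composed right to left. $\mathit{TD}'(T_1,T_2)$ is the least number of transpositions whose product is $\pi(T_2)^{-1}\pi(T_1)$ (zero if this is the identity), and the transposition distance is $\mathit{TD}(T_1,T_2)=\tfrac12\mathit{TD}'(T_1,T_2)$. *)

theory Defs
  imports Complex_Main "HOL-Combinatorics.Cycles"
begin

text \<open>Binary phylogenetic trees: a leaf carries its label; an internal node has exactly
two (unordered in meaning) children.  Nodes of a tree are identified with its subtrees,
which are pairwise distinct since leaf labels are distinct.\<close>

datatype btree = Leaf nat | Node btree btree

fun leaves :: "btree \<Rightarrow> nat list" where
  "leaves (Leaf a) = [a]"
| "leaves (Node l r) = leaves l @ leaves r"

fun subtrees :: "btree \<Rightarrow> btree set" where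
  "subtrees (Leaf a) = {Leaf a}"
| "subtrees (Node l r) = insert (Node l r) (subtrees l \<union> subtrees r)"

fun children :: "btree \<Rightarrow> btree set" where
  "children (Leaf a) = {}"
| "children (Node l r) = {l, r}"

fun is_leaf :: "btree \<Rightarrow> bool" where
  "is_leaf (Leaf a) = True"
| "is_leaf (Node l r) = False"

fun height :: "btree \<Rightarrow> nat" where
  "height (Leaf a) = 0"
| "height (Node l r) = Suc (max (height l) (height r))"

definition binary_phylo :: "nat \<Rightarrow> btree \<Rightarrow> bool" where
  "binary_phylo n T \<longleftrightarrow> distinct (leaves T) \<and> set (leaves T) = {1..n}"

text \<open>The defining properties (a)-(c) of the bottom-up ordering; the map is
normalised to 0 outside the node set so that it is unique as a total function.\<close>
definition is_bottom_up :: "btree \<Rightarrow> (btree \<Rightarrow> nat) \<Rightarrow> bool" where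
  "is_bottom_up T lab \<longleftrightarrow>
     inj_on lab (subtrees T) \<and> lab ` subtrees T \<subseteq> {1..card (subtrees T)} \<and>
     (\<forall>x. x \<notin> subtrees T \<longrightarrow> lab x = 0) \<and>
     (\<forall>a. Leaf a \<in> subtrees T \<longrightarrow> lab (Leaf a) = a) \<and>
     (\<forall>u\<in>subtrees T. \<forall>v\<in>subtrees T. height u < height v \<longrightarrow> lab u < lab v) \<and>
     (\<forall>u\<in>subtrees T. \<forall>v\<in>subtrees T.
        0 < height u \<and> height u = height v \<and>
        Min (lab ` children u) < Min (lab ` children v) \<longrightarrow> lab u < lab v)"

definition bottom_up :: "btree \<Rightarrow> btree \<Rightarrow> nat" where
  "bottom_up T = (THE lab. is_bottom_up T lab)"

definition matching :: "btree \<Rightarrow> nat set set" where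
  "matching T = {bottom_up T ` children u | u. u \<in> subtrees T \<and> \<not> is_leaf u}"

definition kappa :: "nat set \<Rightarrow> nat \<Rightarrow> nat" where
  "kappa S = cycle_of_list (sorted_list_of_set S)"

definition matching_perm :: "btree \<Rightarrow> nat \<Rightarrow> nat" where
  "matching_perm T = Finite_Set.fold (\<lambda>S p. kappa S \<circ> p) id (matching T)"

text \<open>TD': least number of transpositions of S_{2n-2} whose product is
pi(T2)^{-1} pi(T1) (composition right to left).\<close>
definition TD' :: "nat \<Rightarrow> btree \<Rightarrow> btree \<Rightarrow> nat" where
  "TD' n T1 T2 = (LEAST k. \<exists>ts :: (nat \<Rightarrow> nat) list. length ts = k \<and>
      (\<forall>t\<in>set ts. \<exists>a b. a \<noteq> b \<and> a \<in> {1..2*n-2} \<and> b \<in> {1..2*n-2} \<and> t = transpose a b) \<and>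
      foldr (\<circ>) ts id = inv (matching_perm T2) \<circ> matching_perm T1)"

definition TD :: "nat \<Rightarrow> btree \<Rightarrow> btree \<Rightarrow> real" where
  "TD n T1 T2 = real (TD' n T1 T2) / 2"

text \<open>Connected components of the multigraph on {1..2n-2} with edge multiset
M(T1) + M(T2); edge multiplicities do not affect connectivity.\<close>
definition graph_edges :: "btree \<Rightarrow> btree \<Rightarrow> nat rel" where
  "graph_edges T1 T2 = {(x, y). \<exists>e \<in> matching T1 \<union> matching T2. x \<in> e \<and> y \<in> e}"

definition components :: "nat \<Rightarrow> btree \<Rightarrow> btree \<Rightarrow> nat set set" where
  "components n T1 T2 = {(graph_edges T1 T2)\<^sup>* `` {x} | x. x \<in> {1..2*n-2}}"

end

theory Submission
  imports Defs "HOL-Library.List_Lexorder"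
begin

definition invol :: "nat set \<Rightarrow> (nat \<Rightarrow> nat) \<Rightarrow> bool" where
  "invol V s \<longleftrightarrow> (\<forall>x. s (s x) = x) \<and> (\<forall>x\<in>V. s x \<noteq> x \<and> s x \<in> V) \<and> (\<forall>x. x \<notin> V \<longrightarrow> s x = x)"

definition Gr :: "nat set \<Rightarrow> (nat \<Rightarrow> nat) \<Rightarrow> (nat \<Rightarrow> nat) \<Rightarrow> nat rel" where
  "Gr V s1 s2 = {(x,y). x \<in> V \<and> (y = s1 x \<or> y = s2 x)}"

definition cls :: "'a rel \<Rightarrow> 'a set \<Rightarrow> 'a set set" where
  "cls R V = {R\<^sup>* `` {x} | x. x \<in> V}"

definition valid_ts :: "nat set \<Rightarrow> (nat \<Rightarrow> nat) list \<Rightarrow> bool" where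
  "valid_ts V ts \<longleftrightarrow> (\<forall>t\<in>set ts. \<exists>a b. a \<noteq> b \<and> a \<in> V \<and> b \<in> V \<and> t = transpose a b)"

definition Ets :: "('a \<Rightarrow> 'a) list \<Rightarrow> 'a rel" where
  "Ets ts = {(x, y). \<exists>t\<in>set ts. y = t x \<and> y \<noteq> x}"

lemma sym_class_eq:
  assumes "sym R" "(x,y) \<in> R\<^sup>*"
  shows "R\<^sup>* `` {x} = R\<^sup>* `` {y}"
proof -
  have s: "sym (R\<^sup>*)" using assms(1) by (rule sym_rtrancl)
  have "(y,x) \<in> R\<^sup>*" using s assms(2) by (meson symD)
  then show ?thesis using assms(2) by (auto intro: rtrancl_trans)
qed

lemma cls_finite: "finite V \<Longrightarrow> finite (cls R V)"
  unfolding cls_def by (simp add: Setcompr_eq_image)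

lemma card_cls_empty: "finite V \<Longrightarrow> card (cls {} V) = card V"
proof -
  assume f: "finite V"
  have "cls {} V = (\<lambda>x. {x}) ` V" unfolding cls_def by auto
  moreover have "inj_on (\<lambda>x. {x}) V" by (auto simp: inj_on_def)
  ultimately show ?thesis by (simp add: card_image)
qed

lemma cls_insert:
  assumes sR: "sym R" and aV: "a \<in> V" and bV: "b \<in> V" and fV: "finite V"
  shows "card (cls R V) \<le> card (cls (insert (a,b) (insert (b,a) R)) V) + 1"
proof -
  define R' where "R' = insert (a,b) (insert (b,a) R)"
  define A where "A = R\<^sup>* `` {a}"
  define B where "B = R\<^sup>* `` {b}"
  have symS: "sym (R\<^sup>*)" using sR by (rule sym_rtrancl)
  have sub: "R\<^sup>* \<subseteq> R'\<^sup>*" unfolding R'_def by (rule rtrancl_mono) auto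
  define Q where "Q = R\<^sup>* \<union> (A \<union> B) \<times> (A \<union> B)"
  have closed: "(x,y) \<in> R\<^sup>* \<Longrightarrow> x \<in> A \<union> B \<longleftrightarrow> y \<in> A \<union> B" for x y
  proof -
    assume xy: "(x,y) \<in> R\<^sup>*"
    then have yx: "(y,x) \<in> R\<^sup>*" using symS by (meson symD)
    show ?thesis
    proof
      assume "x \<in> A \<union> B"
      then have "(a,x) \<in> R\<^sup>* \<or> (b,x) \<in> R\<^sup>*" unfolding A_def B_def by auto
      then have "(a,y) \<in> R\<^sup>* \<or> (b,y) \<in> R\<^sup>*" using xy by (meson rtrancl_trans)
      then show "y \<in> A \<union> B" unfolding A_def B_def by auto
    next
      assume "y \<in> A \<union> B"
      then have "(a,y) \<in> R\<^sup>* \<or> (b,y) \<in> R\<^sup>*" unfolding A_def B_def by auto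
      then have "(a,x) \<in> R\<^sup>* \<or> (b,x) \<in> R\<^sup>*" using yx by (meson rtrancl_trans)
      then show "x \<in> A \<union> B" unfolding A_def B_def by auto
    qed
  qed
  have R'Q: "(x,y) \<in> R'\<^sup>* \<Longrightarrow> (x,y) \<in> Q" for x y
  proof (induction rule: rtrancl_induct)
    case base then show ?case unfolding Q_def by auto
  next
    case (step y z)
    from step.hyps(2) consider "(y,z) \<in> R" | "y = a" "z = b" | "y = b" "z = a"
      unfolding R'_def by auto
    then show ?case
    proof cases
      case 1
      show ?thesis using step.IH 1 closed unfolding Q_def
        by (auto intro: rtrancl_into_rtrancl)
    next
      case 2
      have "a \<in> A" "b \<in> B" unfolding A_def B_def by auto
      then show ?thesis using step.IH 2 closed[of x a] unfolding Q_def by auto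
    next
      case 3
      have "a \<in> A" "b \<in> B" unfolding A_def B_def by auto
      then show ?thesis using step.IH 3 closed[of x b] unfolding Q_def by auto
    qed
  qed
  have other: "R'\<^sup>* `` {x} = R\<^sup>* `` {x}" if "x \<notin> A \<union> B" for x
  proof
    show "R'\<^sup>* `` {x} \<subseteq> R\<^sup>* `` {x}" using R'Q that unfolding Q_def by auto
    show "R\<^sup>* `` {x} \<subseteq> R'\<^sup>* `` {x}" using sub by auto
  qed
  have aclass: "R'\<^sup>* `` {a} = A \<union> B"
  proof
    show "R'\<^sup>* `` {a} \<subseteq> A \<union> B"
    proof
      fix y assume "y \<in> R'\<^sup>* `` {a}"
      then have "(a,y) \<in> Q" using R'Q by auto
      moreover have "a \<in> A" unfolding A_def by auto
      ultimately show "y \<in> A \<union> B" using closed[of a y] unfolding Q_def by auto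
    qed
    show "A \<union> B \<subseteq> R'\<^sup>* `` {a}"
    proof
      fix y assume "y \<in> A \<union> B"
      then show "y \<in> R'\<^sup>* `` {a}"
      proof
        assume "y \<in> A" then show ?thesis using sub unfolding A_def by auto
      next
        assume "y \<in> B"
        then have "(b,y) \<in> R'\<^sup>*" using sub unfolding B_def by auto
        moreover have "(a,b) \<in> R'" unfolding R'_def by auto
        ultimately show ?thesis by (auto intro: converse_rtrancl_into_rtrancl)
      qed
    qed
  qed
  have AinV: "A \<in> cls R V" "B \<in> cls R V" unfolding A_def B_def cls_def using aV bV by auto
  have keep: "cls R V - {A, B} \<subseteq> cls R' V"
  proof
    fix X assume X: "X \<in> cls R V - {A, B}"
    then obtain x where x: "x \<in> V" "X = R\<^sup>* `` {x}" unfolding cls_def by auto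
    have "x \<notin> A \<union> B"
    proof
      assume "x \<in> A \<union> B"
      then have "X = A \<or> X = B" unfolding x(2) A_def B_def
        using sym_class_eq[OF sR] by auto
      then show False using X by auto
    qed
    then show "X \<in> cls R' V" using other x unfolding cls_def by auto
  qed
  have ABin: "A \<union> B \<in> cls R' V" using aclass aV unfolding cls_def by auto
  have fin: "finite (cls R V)" "finite (cls R' V)" using fV cls_finite by auto
  show ?thesis
  proof (cases "A = B")
    case True
    then have "cls R V \<subseteq> cls R' V" using keep ABin AinV by auto
    then have "card (cls R V) \<le> card (cls R' V)" using fin(2) by (rule card_mono[rotated])
    then show ?thesis unfolding R'_def by simp
  next
    case False
    have nin: "A \<union> B \<notin> cls R V - {A, B}"
    proof
      assume "A \<union> B \<in> cls R V - {A, B}"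
      then obtain x where x: "x \<in> V" "A \<union> B = R\<^sup>* `` {x}" "A \<union> B \<noteq> A" unfolding cls_def by auto
      have "a \<in> A" unfolding A_def by auto
      then have "(x,a) \<in> R\<^sup>*" using x by auto
      then have "R\<^sup>* `` {x} = A" unfolding A_def using sym_class_eq[OF sR] by auto
      then show False using x by auto
    qed
    have "insert (A \<union> B) (cls R V - {A, B}) \<subseteq> cls R' V" using keep ABin by auto
    then have "card (insert (A \<union> B) (cls R V - {A, B})) \<le> card (cls R' V)"
      using fin by (simp add: card_mono)
    moreover have "card (insert (A \<union> B) (cls R V - {A, B})) = card (cls R V - {A, B}) + 1"
      using nin fin by simp
    moreover have "card (cls R V - {A, B}) + 2 \<ge> card (cls R V)"
    proof -
      have "card (cls R V) \<le> card (cls R V - {A,B}) + card {A,B}"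
      proof -
        have "cls R V \<subseteq> (cls R V - {A,B}) \<union> {A,B}" by auto
        then have "card (cls R V) \<le> card ((cls R V - {A,B}) \<union> {A,B})"
          using fin by (intro card_mono) auto
        also have "\<dots> \<le> card (cls R V - {A,B}) + card {A,B}" by (rule card_Un_le)
        finally show ?thesis .
      qed
      moreover have "card {A,B} \<le> 2" by (simp add: card_insert_le_m1)
      ultimately show ?thesis by linarith
    qed
    ultimately have "card (cls R V) \<le> card (cls R' V) + 1" by linarith
    then show ?thesis unfolding R'_def by simp
  qed
qed

lemma Ets_Cons_gen: "Ets (t # ts) = {(x, y). y = t x \<and> y \<noteq> x} \<union> Ets ts"
  unfolding Ets_def by auto

lemma Ets_Cons:
  assumes "a \<noteq> b"
  shows "Ets (transpose a b # ts) = insert (a,b) (insert (b,a) (Ets ts))"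
proof -
  have "{(x, y). y = transpose a b x \<and> y \<noteq> x} = {(a,b),(b,a)}"
  proof
    show "{(x, y). y = transpose a b x \<and> y \<noteq> x} \<subseteq> {(a,b),(b,a)}"
      by (auto simp: transpose_def split: if_splits)
    show "{(a,b),(b,a)} \<subseteq> {(x, y). y = transpose a b x \<and> y \<noteq> x}"
      using assms by auto
  qed
  then show ?thesis unfolding Ets_Cons_gen by simp
qed

lemma sym_Ets: "(\<forall>t\<in>set ts. \<forall>x. t (t x) = x) \<Longrightarrow> sym (Ets ts)"
proof (rule symI)
  fix u v assume inv: "\<forall>t\<in>set ts. \<forall>x. t (t x) = x" and "(u,v) \<in> Ets ts"
  then obtain t where t: "t \<in> set ts" "v = t u" "v \<noteq> u" unfolding Ets_def by auto
  then have "u = t v" "u \<noteq> v" using inv by auto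
  then show "(v,u) \<in> Ets ts" unfolding Ets_def using t(1) by blast
qed

lemma valid_invol: "valid_ts V ts \<Longrightarrow> \<forall>t\<in>set ts. \<forall>x. t (t x) = x"
  unfolding valid_ts_def by (auto simp: transpose_def)

lemma lower_count:
  assumes "finite V" "valid_ts V ts"
  shows "card V \<le> card (cls (Ets ts) V) + length ts"
  using assms(2)
proof (induction ts)
  case Nil
  have "Ets [] = {}" unfolding Ets_def by auto
  then show ?case by (simp only: \<open>Ets [] = {}\<close>) (simp add: card_cls_empty[OF assms(1)])
next
  case (Cons t ts)
  from Cons.prems obtain a b where ab: "a \<noteq> b" "a \<in> V" "b \<in> V" "t = transpose a b"
    unfolding valid_ts_def by auto
  have v: "valid_ts V ts" using Cons.prems unfolding valid_ts_def by auto
  have s: "sym (Ets ts)" using sym_Ets valid_invol[OF v] by blast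
  have "card (cls (Ets ts) V) \<le> card (cls (Ets (t # ts)) V) + 1"
    using cls_insert[OF s ab(2,3) assms(1)] Ets_Cons[OF ab(1)] ab(4) by simp
  then show ?case using Cons.IH[OF v] by simp
qed

lemma foldr_rel: "(x, foldr (\<circ>) ts id x) \<in> (Ets ts)\<^sup>*"
proof (induction ts)
  case Nil then show ?case by simp
next
  case (Cons t ts)
  have m: "(Ets ts)\<^sup>* \<subseteq> (Ets (t # ts))\<^sup>*" by (rule rtrancl_mono) (auto simp: Ets_def)
  let ?y = "foldr (\<circ>) ts id x"
  have "(?y, t ?y) \<in> (Ets (t # ts))\<^sup>*"
  proof (cases "t ?y = ?y")
    case True then show ?thesis by simp
  next
    case False then have "(?y, t ?y) \<in> Ets (t # ts)" unfolding Ets_def by auto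
    then show ?thesis by auto
  qed
  moreover have "(x, ?y) \<in> (Ets (t # ts))\<^sup>*" using subsetD[OF m Cons.IH] .
  ultimately have "(x, t ?y) \<in> (Ets (t # ts))\<^sup>*" by (meson rtrancl_trans)
  moreover have "foldr (\<circ>) (t # ts) id x = t ?y" by simp
  ultimately show ?case by (simp only:)
qed

lemma invol_simps:
  assumes "invol V s"
  shows "s (s x) = x" "x \<in> V \<Longrightarrow> s x \<noteq> x" "x \<in> V \<Longrightarrow> s x \<in> V" "x \<notin> V \<Longrightarrow> s x = x"
  using assms unfolding invol_def by auto

lemma comp_invariant:
  assumes i1: "invol V s1" and i2: "invol V s2" and sR: "sym R"
    and p: "\<And>z. (z, s2 (s1 z)) \<in> R\<^sup>*"
    and xy: "(x,y) \<in> (Gr V s1 s2)\<^sup>*"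
  shows "((x,y) \<in> R\<^sup>* \<and> (s1 x, s1 y) \<in> R\<^sup>*) \<or> ((s1 x, y) \<in> R\<^sup>* \<and> (x, s1 y) \<in> R\<^sup>*)"
  using xy
proof (induction rule: rtrancl_induct)
  case base then show ?case by simp
next
  case (step y z)
  have symS: "sym (R\<^sup>*)" using sR by (rule sym_rtrancl)
  have q: "(s1 (s2 w), w) \<in> R\<^sup>*" for w
    using p[of "s1 (s2 w)"] by (simp add: invol_simps[OF i1] invol_simps[OF i2])
  have p': "(s2 w, s1 w) \<in> R\<^sup>*" for w
    using p[of "s1 w"] symS by (simp add: invol_simps[OF i1] symD)
  have q': "(s1 (s2 w), w) \<in> R\<^sup>*" for w using q .
  from step.hyps(2) have "z = s1 y \<or> z = s2 y" unfolding Gr_def by auto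
  then show ?case
  proof
    assume z: "z = s1 y"
    then show ?thesis using step.IH by (auto simp: invol_simps[OF i1])
  next
    assume z: "z = s2 y"
    have a: "(s2 y, s1 y) \<in> R\<^sup>*" by (rule p')
    have b: "(s1 (s2 y), y) \<in> R\<^sup>*" by (rule q)
    from step.IH show ?thesis
    proof
      assume h: "(x,y) \<in> R\<^sup>* \<and> (s1 x, s1 y) \<in> R\<^sup>*"
      have "(s1 x, z) \<in> R\<^sup>*" using h a symS z by (meson rtrancl_trans symD)
      moreover have "(x, s1 z) \<in> R\<^sup>*" using h b symS z by (meson rtrancl_trans symD)
      ultimately show ?thesis by simp
    next
      assume h: "(s1 x, y) \<in> R\<^sup>* \<and> (x, s1 y) \<in> R\<^sup>*"
      have "(x, z) \<in> R\<^sup>*" using h a symS z by (meson rtrancl_trans symD)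
      moreover have "(s1 x, s1 z) \<in> R\<^sup>*" using h b symS z by (meson rtrancl_trans symD)
      ultimately show ?thesis by simp
    qed
  qed
qed

lemma cls_two:
  assumes i1: "invol V s1" and i2: "invol V s2" and sR: "sym R" and fV: "finite V"
    and p: "\<And>z. (z, s2 (s1 z)) \<in> R\<^sup>*"
  shows "card (cls R V) \<le> 2 * card (cls (Gr V s1 s2) V)"
proof -
  let ?G = "Gr V s1 s2"
  define F where "F K = {R\<^sup>* `` {y} | y. y \<in> K}" for K
  have sub: "cls R V \<subseteq> (\<Union>K\<in>cls ?G V. F K)"
  proof
    fix X assume "X \<in> cls R V"
    then obtain x where x: "x \<in> V" "X = R\<^sup>* `` {x}" unfolding cls_def by auto
    have "?G\<^sup>* `` {x} \<in> cls ?G V" using x unfolding cls_def by auto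
    moreover have "X \<in> F (?G\<^sup>* `` {x})" unfolding F_def using x by auto
    ultimately show "X \<in> (\<Union>K\<in>cls ?G V. F K)" by auto
  qed
  have small: "finite (F K) \<and> card (F K) \<le> 2" if K: "K \<in> cls ?G V" for K
  proof -
    obtain x where x: "x \<in> V" "K = ?G\<^sup>* `` {x}" using K unfolding cls_def by auto
    have "F K \<subseteq> {R\<^sup>* `` {x}, R\<^sup>* `` {s1 x}}"
    proof
      fix Y assume "Y \<in> F K"
      then obtain y where y: "y \<in> K" "Y = R\<^sup>* `` {y}" unfolding F_def by auto
      have "(x,y) \<in> ?G\<^sup>*" using x y by auto
      then have "(x,y) \<in> R\<^sup>* \<or> (s1 x, y) \<in> R\<^sup>*" using comp_invariant[OF i1 i2 sR p] by blast
      then show "Y \<in> {R\<^sup>* `` {x}, R\<^sup>* `` {s1 x}}" using sym_class_eq[OF sR] y by auto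
    qed
    moreover have "card {R\<^sup>* `` {x}, R\<^sup>* `` {s1 x}} \<le> 2" by (simp add: card_insert_le_m1)
    ultimately show ?thesis by (meson card_mono finite.emptyI finite_insert order_trans finite_subset)
  qed
  have "card (cls R V) \<le> card (\<Union>K\<in>cls ?G V. F K)"
    using sub by (rule card_mono[rotated]) (use small fV cls_finite in \<open>auto\<close>)
  also have "\<dots> \<le> (\<Sum>K\<in>cls ?G V. card (F K))" by (rule card_UN_le) (simp add: cls_finite fV)
  also have "\<dots> \<le> (\<Sum>K\<in>cls ?G V. 2)" by (rule sum_mono) (use small in auto)
  finally show ?thesis by simp
qed

lemma Gr_sym:
  assumes i1: "invol V s1" and i2: "invol V s2"
  shows "sym (Gr V s1 s2)"
proof (rule symI)
  fix x y assume "(x,y) \<in> Gr V s1 s2"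
  then have "x \<in> V" "y = s1 x \<or> y = s2 x" unfolding Gr_def by auto
  then show "(y,x) \<in> Gr V s1 s2" unfolding Gr_def
    using invol_simps[OF i1] invol_simps[OF i2] by auto
qed

lemma Gr_closed:
  assumes i1: "invol V s1" and i2: "invol V s2" and x: "x \<in> V"
  shows "(Gr V s1 s2)\<^sup>* `` {x} \<subseteq> V"
proof
  fix y assume "y \<in> (Gr V s1 s2)\<^sup>* `` {x}"
  then have "(x,y) \<in> (Gr V s1 s2)\<^sup>*" by auto
  then show "y \<in> V"
  proof (induction rule: rtrancl_induct)
    case base then show ?case using x .
  next
    case (step y z) then show ?case unfolding Gr_def
      using invol_simps[OF i1] invol_simps[OF i2] by auto
  qed
qed

lemma two_le:
  assumes fV: "finite V" and i1: "invol V s1" and i2: "invol V s2"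
  shows "2 * card (cls (Gr V s1 s2) V) \<le> card V"
proof -
  let ?G = "Gr V s1 s2"
  let ?C = "cls ?G V"
  have sG: "sym ?G" by (rule Gr_sym[OF i1 i2])
  have sub: "K \<subseteq> V" if "K \<in> ?C" for K
    using that Gr_closed[OF i1 i2] unfolding cls_def by auto
  have finK: "finite K" if "K \<in> ?C" for K using sub[OF that] fV finite_subset by auto
  have disj: "pairwise disjnt ?C"
  proof (rule pairwiseI)
    fix K1 K2 assume K: "K1 \<in> ?C" "K2 \<in> ?C" "K1 \<noteq> K2"
    then obtain x1 x2 where x: "K1 = ?G\<^sup>* `` {x1}" "K2 = ?G\<^sup>* `` {x2}" unfolding cls_def by auto
    show "disjnt K1 K2"
    proof (rule ccontr)
      assume "\<not> disjnt K1 K2"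
      then obtain y where "y \<in> K1" "y \<in> K2" unfolding disjnt_def by auto
      then have "K1 = ?G\<^sup>* `` {y}" "K2 = ?G\<^sup>* `` {y}" using x sym_class_eq[OF sG] by auto
      then show False using K by auto
    qed
  qed
  have two: "2 \<le> card K" if "K \<in> ?C" for K
  proof -
    obtain x where x: "x \<in> V" "K = ?G\<^sup>* `` {x}" using \<open>K \<in> ?C\<close> unfolding cls_def by auto
    have "(x, s1 x) \<in> ?G" using x unfolding Gr_def by auto
    then have "{x, s1 x} \<subseteq> K" using x by auto
    moreover have "card {x, s1 x} = 2" using invol_simps(2)[OF i1 x(1)] by auto
    ultimately show ?thesis using finK[OF that] by (metis card_mono)
  qed
  have "card (\<Union>?C) = sum card ?C" by (rule card_Union_disjoint[OF disj finK])
  moreover have "card (\<Union>?C) \<le> card V" using sub fV by (intro card_mono) auto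
  moreover have "(\<Sum>K\<in>?C. 2) \<le> sum card ?C" by (rule sum_mono) (use two in auto)
  ultimately show ?thesis by (simp add: mult.commute)
qed

lemma lower_bound:
  assumes fV: "finite V" and i1: "invol V s1" and i2: "invol V s2"
    and v: "valid_ts V ts" and eq: "foldr (\<circ>) ts id = s2 \<circ> s1"
  shows "card V \<le> 2 * card (cls (Gr V s1 s2) V) + length ts"
proof -
  have s: "sym (Ets ts)" using sym_Ets valid_invol[OF v] by blast
  have p: "(z, s2 (s1 z)) \<in> (Ets ts)\<^sup>*" for z
    using foldr_rel[of z ts] eq by simp
  show ?thesis using lower_count[OF fV v] cls_two[OF i1 i2 s fV p] by linarith
qed

lemma cls_strict:
  assumes fV: "finite V" and i1: "invol V s1" and i2: "invol V s2" and i2': "invol V s2'"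
    and sub: "Gr V s1 s2' \<subseteq> (Gr V s1 s2)\<^sup>*"
    and a: "a \<in> V" and c: "c \<in> V" and ac: "(a, c) \<in> (Gr V s1 s2)\<^sup>*"
    and nac: "c \<notin> (Gr V s1 s2')\<^sup>* `` {a}"
  shows "card (cls (Gr V s1 s2) V) < card (cls (Gr V s1 s2') V)"
proof -
  let ?G = "Gr V s1 s2" and ?H = "Gr V s1 s2'"
  have sG: "sym ?G" by (rule Gr_sym[OF i1 i2])
  have HG: "?H\<^sup>* \<subseteq> ?G\<^sup>*" using sub by (rule rtrancl_subset_rtrancl)
  define phi where "phi K = ?G\<^sup>* `` K" for K
  have phi_x: "phi (?H\<^sup>* `` {x}) = ?G\<^sup>* `` {x}" for x
  proof
    show "phi (?H\<^sup>* `` {x}) \<subseteq> ?G\<^sup>* `` {x}"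
      unfolding phi_def using HG by (auto intro: rtrancl_trans)
    show "?G\<^sup>* `` {x} \<subseteq> phi (?H\<^sup>* `` {x})" unfolding phi_def by auto
  qed
  have img: "phi ` cls ?H V = cls ?G V"
    unfolding cls_def using phi_x by (auto simp: image_iff)
  have fin: "finite (cls ?H V)" using fV cls_finite by auto
  have K1: "?H\<^sup>* `` {a} \<in> cls ?H V" "?H\<^sup>* `` {c} \<in> cls ?H V" using a c unfolding cls_def by auto
  have ne: "?H\<^sup>* `` {a} \<noteq> ?H\<^sup>* `` {c}" using nac by auto
  have same: "phi (?H\<^sup>* `` {a}) = phi (?H\<^sup>* `` {c})"
    unfolding phi_x using sym_class_eq[OF sG ac] .
  have ninj: "\<not> inj_on phi (cls ?H V)" using K1 ne same unfolding inj_on_def by blast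
  have le: "card (cls ?G V) \<le> card (cls ?H V)" unfolding img[symmetric] using fin by (rule card_image_le)
  have "card (cls ?G V) \<noteq> card (cls ?H V)"
  proof
    assume "card (cls ?G V) = card (cls ?H V)"
    then have "card (phi ` cls ?H V) = card (cls ?H V)" using img by simp
    then have "inj_on phi (cls ?H V)" by (rule eq_card_imp_inj_on[OF fin])
    then show False using ninj by simp
  qed
  then show ?thesis using le by simp
qed

lemma upper_bound:
  assumes fV: "finite V" and i1: "invol V s1"
  shows "invol V s2 \<Longrightarrow> \<exists>ts. valid_ts V ts \<and> foldr (\<circ>) ts id = s2 \<circ> s1 \<and>
            length ts + 2 * card (cls (Gr V s1 s2) V) \<le> card V"
proof (induction "card {x\<in>V. s1 x \<noteq> s2 x}" arbitrary: s2 rule: less_induct)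
  case less
  note i2 = less.prems
  show ?case
  proof (cases "\<forall>x\<in>V. s1 x = s2 x")
    case True
    have "s2 = s1"
    proof
      fix x show "s2 x = s1 x" using True invol_simps(4)[OF i1] invol_simps(4)[OF i2] by (cases "x \<in> V") auto
    qed
    then have "foldr (\<circ>) [] id = s2 \<circ> s1" using invol_simps(1)[OF i1] by (auto simp: fun_eq_iff)
    moreover have "valid_ts V []" unfolding valid_ts_def by simp
    ultimately show ?thesis using two_le[OF fV i1 i2] by (intro exI[of _ "[]"]) simp
  next
    case False
    then obtain a where a: "a \<in> V" "s1 a \<noteq> s2 a" by auto
    define b where "b = s1 a"
    define c where "c = s2 a"
    define d where "d = s2 b"
    note I1 = invol_simps[OF i1] and I2 = invol_simps[OF i2]
    have V: "b \<in> V" "c \<in> V" "d \<in> V" using a I1 I2 unfolding b_def c_def d_def by auto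
    have s1: "s1 a = b" "s1 b = a" unfolding b_def using I1 by auto
    have s2: "s2 a = c" "s2 c = a" "s2 b = d" "s2 d = b" unfolding c_def d_def using I2 by auto
    have dist: "a \<noteq> b" "a \<noteq> c" "a \<noteq> d" "b \<noteq> c" "b \<noteq> d" "c \<noteq> d"
      using a I1(2)[of a] I2(2)[of a] I2(2)[of b] V s1 s2 unfolding b_def c_def d_def
      by (metis I2(1))+
    define s2' where "s2' y = (if y = a then b else if y = b then a else if y = c then d
        else if y = d then c else s2 y)" for y
    have s2'_other: "s2' y = s2 y" if "y \<notin> {a,b,c,d}" for y using that unfolding s2'_def by auto
    have s2_other: "s2 y \<notin> {a,b,c,d}" if "y \<notin> {a,b,c,d}" for y
    proof
      assume "s2 y \<in> {a,b,c,d}"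
      then have "s2 (s2 y) \<in> {s2 a, s2 b, s2 c, s2 d}" by blast
      then show False using that s2 I2(1)[of y] by auto
    qed
    have i2': "invol V s2'"
      unfolding invol_def
    proof (intro conjI allI ballI impI)
      fix x show "s2' (s2' x) = x"
        using dist s2_other[of x] I2(1)[of x] s2'_other[of x] s2'_other[of "s2 x"]
        unfolding s2'_def by auto
    next
      fix x assume "x \<in> V"
      then show "s2' x \<noteq> x" "s2' x \<in> V"
        using dist V a s2'_other[of x] I2(2,3)[of x] unfolding s2'_def by auto
    next
      fix x assume "x \<notin> V"
      then show "s2' x = x" using V a I2(4) unfolding s2'_def by auto
    qed
    have diffsub: "{x\<in>V. s1 x \<noteq> s2' x} \<subset> {x\<in>V. s1 x \<noteq> s2 x}"
    proof
      show "{x\<in>V. s1 x \<noteq> s2' x} \<subseteq> {x\<in>V. s1 x \<noteq> s2 x}"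
      proof
        fix x assume x: "x \<in> {x\<in>V. s1 x \<noteq> s2' x}"
        have "s1 c \<noteq> a" using s1 dist I1(1) by metis
        moreover have "s1 d \<noteq> b" using s1 dist I1(1) by metis
        ultimately show "x \<in> {x\<in>V. s1 x \<noteq> s2 x}"
          using x s1 s2 s2'_other[of x] unfolding s2'_def by (auto split: if_splits)
      qed
      show "{x\<in>V. s1 x \<noteq> s2' x} \<noteq> {x\<in>V. s1 x \<noteq> s2 x}"
        using a s1 unfolding s2'_def by auto
    qed
    have "card {x\<in>V. s1 x \<noteq> s2' x} < card {x\<in>V. s1 x \<noteq> s2 x}"
      using diffsub fV by (intro psubset_card_mono) auto
    from less.hyps[OF this i2'] obtain ts where
      ts: "valid_ts V ts" "foldr (\<circ>) ts id = s2' \<circ> s1"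
          "length ts + 2 * card (cls (Gr V s1 s2') V) \<le> card V" by blast
    define ts2 where "ts2 = transpose a d # transpose b c # ts"
    have v2: "valid_ts V ts2" using ts(1) dist a V unfolding ts2_def valid_ts_def by auto
    have pt: "s2 w = transpose a d (transpose b c (s2' w))" for w
    proof (cases "w \<in> {a,b,c,d}")
      case True then show ?thesis using dist s2 unfolding s2'_def by (auto simp: transpose_def)
    next
      case False
      then show ?thesis using s2'_other[OF False] s2_other[OF False] by (auto simp: transpose_def)
    qed
    have f2: "foldr (\<circ>) ts2 id = s2 \<circ> s1"
      unfolding ts2_def using ts(2) pt by (auto simp: fun_eq_iff)
    have sub: "Gr V s1 s2' \<subseteq> (Gr V s1 s2)\<^sup>*"
    proof
      fix p assume "p \<in> Gr V s1 s2'"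
      then obtain x y where p: "p = (x,y)" "x \<in> V" "y = s1 x \<or> y = s2' x" unfolding Gr_def by auto
      have e1: "(u, s1 u) \<in> (Gr V s1 s2)\<^sup>*" if "u \<in> V" for u using that unfolding Gr_def by auto
      have e2: "(u, s2 u) \<in> (Gr V s1 s2)\<^sup>*" if "u \<in> V" for u using that unfolding Gr_def by auto
      have "(x,y) \<in> (Gr V s1 s2)\<^sup>*"
      proof (cases "y = s1 x")
        case True then show ?thesis using e1 p by simp
      next
        case False
        then have y: "y = s2' x" using p by auto
        consider "x = a" | "x = b" | "x = c" | "x = d" | "x \<notin> {a,b,c,d}" by auto
        then show ?thesis
        proof cases
          case 1 then show ?thesis using y e1[of a] a s1 unfolding s2'_def by auto
        next
          case 2 then show ?thesis using y e1[of b] V s1 dist unfolding s2'_def by auto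
        next
          case 3
          have "(c, a) \<in> (Gr V s1 s2)\<^sup>*" using e2[of c] V s2 by simp
          moreover have "(a, b) \<in> (Gr V s1 s2)\<^sup>*" using e1[of a] a s1 by simp
          moreover have "(b, d) \<in> (Gr V s1 s2)\<^sup>*" using e2[of b] V s2 by simp
          ultimately show ?thesis using 3 y dist unfolding s2'_def by (auto intro: rtrancl_trans)
        next
          case 4
          have "(d, b) \<in> (Gr V s1 s2)\<^sup>*" using e2[of d] V s2 by simp
          moreover have "(b, a) \<in> (Gr V s1 s2)\<^sup>*" using e1[of b] V s1 by simp
          moreover have "(a, c) \<in> (Gr V s1 s2)\<^sup>*" using e2[of a] a s2 by simp
          ultimately show ?thesis using 4 y dist unfolding s2'_def by (auto intro: rtrancl_trans)
        next
          case 5 then show ?thesis using y e2[of x] p s2'_other by auto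
        qed
      qed
      then show "p \<in> (Gr V s1 s2)\<^sup>*" using p by simp
    qed
    have ac: "(a, c) \<in> (Gr V s1 s2)\<^sup>*" using a s2 unfolding Gr_def by auto
    have nac: "c \<notin> (Gr V s1 s2')\<^sup>* `` {a}"
    proof
      assume "c \<in> (Gr V s1 s2')\<^sup>* `` {a}"
      then have "(a, c) \<in> (Gr V s1 s2')\<^sup>*" by auto
      then have "c \<in> {a, b}"
      proof (induction rule: rtrancl_induct)
        case base then show ?case by simp
      next
        case (step y z) then show ?case using s1 unfolding Gr_def s2'_def by auto
      qed
      then show False using dist by auto
    qed
    have lt: "card (cls (Gr V s1 s2) V) < card (cls (Gr V s1 s2') V)"
      by (rule cls_strict[OF fV i1 i2 i2' sub a(1) V(2) ac nac])
    have "length ts2 + 2 * card (cls (Gr V s1 s2) V) \<le> card V"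
      using ts(3) lt unfolding ts2_def by simp
    then show ?thesis using v2 f2 by blast
  qed
qed

lemma subtrees_self: "t \<in> subtrees t"
  by (cases t) auto

lemma subtrees_trans: "u \<in> subtrees t \<Longrightarrow> subtrees u \<subseteq> subtrees t"
  by (induction t) auto

lemma subtrees_size: "u \<in> subtrees t \<Longrightarrow> size u \<le> size t"
  by (induction t) auto

lemma children_size: "u \<in> children v \<Longrightarrow> size u < size v"
  by (cases v) auto

lemma children_sub_self: "children u \<subseteq> subtrees u"
  by (cases u) (auto simp: subtrees_self)

lemma children_sub: "u \<in> subtrees t \<Longrightarrow> children u \<subseteq> subtrees t"
  using subtrees_trans[of u t] children_sub_self[of u] by auto

lemma leaves_sub: "u \<in> subtrees t \<Longrightarrow> set (leaves u) \<subseteq> set (leaves t)"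
  by (induction t) auto

lemma leaves_ne: "leaves t \<noteq> []"
  by (induction t) auto

lemma finite_subtrees: "finite (subtrees t)"
  by (induction t) auto

lemma subtrees_disj:
  assumes "distinct (leaves (Node l r))"
  shows "subtrees l \<inter> subtrees r = {}"
proof (rule ccontr)
  assume "subtrees l \<inter> subtrees r \<noteq> {}"
  then obtain u where u: "u \<in> subtrees l" "u \<in> subtrees r" by auto
  obtain a where "a \<in> set (leaves u)" using leaves_ne[of u] by (cases "leaves u") auto
  then have "a \<in> set (leaves l)" "a \<in> set (leaves r)" using leaves_sub u by auto
  then show False using assms by auto
qed

lemma not_in_children_subtrees: "Node l r \<notin> subtrees l" "Node l r \<notin> subtrees r"
  using subtrees_size[of "Node l r" l] subtrees_size[of "Node l r" r] by auto

lemma card_subtrees: "distinct (leaves t) \<Longrightarrow> card (subtrees t) = 2 * length (leaves t) - 1"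
proof (induction t)
  case (Leaf a) then show ?case by simp
next
  case (Node l r)
  have d: "distinct (leaves l)" "distinct (leaves r)" using Node.prems by auto
  have disj: "subtrees l \<inter> subtrees r = {}" using subtrees_disj[OF Node.prems] .
  have "card (subtrees (Node l r)) = Suc (card (subtrees l \<union> subtrees r))"
    using not_in_children_subtrees[of l r] finite_subtrees by simp
  also have "\<dots> = Suc (card (subtrees l) + card (subtrees r))"
    using disj finite_subtrees by (simp add: card_Un_disjoint)
  finally have A: "card (subtrees (Node l r)) = Suc (card (subtrees l) + card (subtrees r))" .
  have C: "length (leaves l) \<ge> 1" "length (leaves r) \<ge> 1"
    using leaves_ne[of l] leaves_ne[of r] by (cases "leaves l"; auto; cases "leaves r"; auto)+
  have D: "length (leaves (Node l r)) = length (leaves l) + length (leaves r)" by simp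
  show ?case using A C D Node.IH(1)[OF d(1)] Node.IH(2)[OF d(2)] by arith
qed

lemma Leaf_in_subtrees: "Leaf a \<in> subtrees t \<longleftrightarrow> a \<in> set (leaves t)"
  by (induction t) auto

lemma height_lt: "u \<in> subtrees v \<Longrightarrow> u \<noteq> v \<Longrightarrow> height u < height v"
proof (induction v)
  case (Leaf a) then show ?case by simp
next
  case (Node l r)
  then have "u \<in> subtrees l \<or> u \<in> subtrees r" by auto
  then show ?case
  proof
    assume "u \<in> subtrees l"
    then have "height u \<le> height l" using Node.IH(1) by (cases "u = l") auto
    then show ?thesis by simp
  next
    assume "u \<in> subtrees r"
    then have "height u \<le> height r" using Node.IH(2) by (cases "u = r") auto
    then show ?thesis by simp
  qed
qed

lemma chain:
  "distinct (leaves t) \<Longrightarrow> u \<in> subtrees t \<Longrightarrow> v \<in> subtrees t \<Longrightarrow>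
   a \<in> set (leaves u) \<Longrightarrow> a \<in> set (leaves v) \<Longrightarrow> u \<in> subtrees v \<or> v \<in> subtrees u"
proof (induction t)
  case (Leaf x) then show ?case by auto
next
  case (Node l r)
  have d: "distinct (leaves l)" "distinct (leaves r)" using Node.prems by auto
  consider "u = Node l r" | "v = Node l r" | "u \<in> subtrees l" "v \<in> subtrees l"
    | "u \<in> subtrees r" "v \<in> subtrees r" | "u \<in> subtrees l" "v \<in> subtrees r"
    | "u \<in> subtrees r" "v \<in> subtrees l" using Node.prems by auto
  then show ?case
  proof cases
    case 1 then show ?thesis using Node.prems by auto
  next
    case 2 then show ?thesis using Node.prems by auto
  next
    case 3 then show ?thesis using Node.IH(1)[OF d(1)] Node.prems by auto
  next
    case 4 then show ?thesis using Node.IH(2)[OF d(2)] Node.prems by auto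
  next
    case 5
    then have "a \<in> set (leaves l)" "a \<in> set (leaves r)" using leaves_sub Node.prems by blast+
    then show ?thesis using Node.prems(1) by auto
  next
    case 6
    then have "a \<in> set (leaves l)" "a \<in> set (leaves r)" using leaves_sub Node.prems by blast+
    then show ?thesis using Node.prems(1) by auto
  qed
qed

lemma children_disj:
  "distinct (leaves t) \<Longrightarrow> u \<in> subtrees t \<Longrightarrow> v \<in> subtrees t \<Longrightarrow> u \<noteq> v \<Longrightarrow>
   children u \<inter> children v = {}"
proof (induction t arbitrary: u v)
  case (Leaf x) then show ?case by auto
next
  case (Node l r)
  have d: "distinct (leaves l)" "distinct (leaves r)" using Node.prems by auto
  have disj: "subtrees l \<inter> subtrees r = {}" using subtrees_disj[OF Node.prems(1)] .
  have top: "children (Node l r) \<inter> children w = {}" if w: "w \<in> subtrees l \<union> subtrees r" for w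
  proof -
    have "l \<notin> children w"
    proof
      assume lw: "l \<in> children w"
      show False
      proof (cases "w \<in> subtrees l")
        case True
        then show False using subtrees_size[OF True] children_size[OF lw] by simp
      next
        case False
        then have "w \<in> subtrees r" using w by auto
        then have "l \<in> subtrees r" using children_sub[of w r] lw by auto
        then show False using disj subtrees_self[of l] by auto
      qed
    qed
    moreover have "r \<notin> children w"
    proof
      assume rw: "r \<in> children w"
      show False
      proof (cases "w \<in> subtrees r")
        case True
        then show False using subtrees_size[OF True] children_size[OF rw] by simp
      next
        case False
        then have "w \<in> subtrees l" using w by auto
        then have "r \<in> subtrees l" using children_sub[of w l] rw by auto
        then show False using disj subtrees_self[of r] by auto
      qed
    qed
    ultimately show ?thesis by auto
  qed
  consider "u = Node l r" | "v = Node l r" | "u \<in> subtrees l" "v \<in> subtrees l"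
    | "u \<in> subtrees r" "v \<in> subtrees r" | "u \<in> subtrees l" "v \<in> subtrees r"
    | "u \<in> subtrees r" "v \<in> subtrees l" using Node.prems by auto
  then show ?case
  proof cases
    case 1 then show ?thesis using top Node.prems by auto
  next
    case 2 then show ?thesis using top Node.prems by auto
  next
    case 3 then show ?thesis using Node.IH(1)[OF d(1)] Node.prems by auto
  next
    case 4 then show ?thesis using Node.IH(2)[OF d(2)] Node.prems by auto
  next
    case 5 then show ?thesis using children_sub[of u l] children_sub[of v r] disj by auto
  next
    case 6 then show ?thesis using children_sub[of u r] children_sub[of v l] disj by auto
  qed
qed

lemma children_union: "(\<Union>u\<in>subtrees t. children u) = subtrees t - {t}"
proof (induction t)
  case (Leaf x) then show ?case by simp
next
  case (Node l r)
  have "(\<Union>u\<in>subtrees (Node l r). children u) =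
        {l, r} \<union> (\<Union>u\<in>subtrees l. children u) \<union> (\<Union>u\<in>subtrees r. children u)" by auto
  also have "\<dots> = {l, r} \<union> (subtrees l - {l}) \<union> (subtrees r - {r})" using Node.IH by simp
  also have "\<dots> = subtrees l \<union> subtrees r" using subtrees_self[of l] subtrees_self[of r] by auto
  also have "\<dots> = subtrees (Node l r) - {Node l r}" using not_in_children_subtrees[of l r] by auto
  finally show ?case .
qed

lemma height0: "height u = 0 \<longleftrightarrow> is_leaf u"
  by (cases u) auto

fun rk :: "btree \<Rightarrow> nat list" where
  "rk (Leaf a) = [0, a]"
| "rk (Node l r) = height (Node l r) # min (rk l) (rk r)"

lemma rk_hd: "\<exists>xs. rk u = height u # xs"
  by (cases u) auto

lemma rk_ne: "rk u \<noteq> []"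
  by (cases u) auto

lemma rk_last: "last (rk u) \<in> set (leaves u)"
proof (induction u)
  case (Leaf x) then show ?case by simp
next
  case (Node l r)
  have "last (rk (Node l r)) = last (min (rk l) (rk r))" using rk_ne[of l] rk_ne[of r]
    by (simp add: min_def)
  then show ?case using Node.IH by (auto simp: min_def)
qed

lemma rk_height_less: "height u < height v \<Longrightarrow> rk u < rk v"
  using rk_hd[of u] rk_hd[of v] by auto

lemma rk_less_height: "rk u < rk v \<Longrightarrow> height u \<le> height v"
  using rk_hd[of u] rk_hd[of v] by (metis Cons_less_Cons less_imp_le order.refl)

lemma rk_inj:
  assumes d: "distinct (leaves t)" and u: "u \<in> subtrees t" and v: "v \<in> subtrees t"
    and eq: "rk u = rk v"
  shows "u = v"
proof -
  have h: "height u = height v" using rk_hd[of u] rk_hd[of v] eq by auto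
  have "last (rk u) \<in> set (leaves u)" "last (rk u) \<in> set (leaves v)" using rk_last eq by metis+
  then have "u \<in> subtrees v \<or> v \<in> subtrees u" using chain[OF d u v] by blast
  then show ?thesis using h height_lt by fastforce
qed

definition mc :: "btree \<Rightarrow> btree \<Rightarrow> btree" where
  "mc l r = (if rk l \<le> rk r then l else r)"

lemma rk_mc: "min (rk l) (rk r) = rk (mc l r)"
  unfolding mc_def by (simp add: min_def)

definition monoS :: "btree set \<Rightarrow> (btree \<Rightarrow> nat) \<Rightarrow> bool" where
  "monoS X lab \<longleftrightarrow> (\<forall>x\<in>X. \<forall>y\<in>X. rk x < rk y \<longrightarrow> lab x < lab y)"

lemma mono_rev:
  assumes m: "monoS X lab" and i: "inj_on rk X" and x: "x \<in> X" and y: "y \<in> X"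
    and lt: "lab x < lab y"
  shows "rk x < rk y"
proof (rule ccontr)
  assume "\<not> rk x < rk y"
  then have "rk y < rk x \<or> rk y = rk x" by auto
  then show False
  proof
    assume "rk y < rk x" then have "lab y < lab x" using m x y unfolding monoS_def by auto
    then show False using lt by simp
  next
    assume "rk y = rk x" then have "x = y" using i x y unfolding inj_on_def by auto
    then show False using lt by simp
  qed
qed

lemma min_lab:
  assumes m: "monoS X lab" and i: "inj_on rk X" and l: "l \<in> X" and r: "r \<in> X"
  shows "min (lab l) (lab r) = lab (mc l r)"
proof (cases "rk l < rk r")
  case True
  then have "lab l < lab r" using m l r unfolding monoS_def by auto
  then show ?thesis using True unfolding mc_def by simp
next
  case False
  then have "rk r < rk l \<or> rk r = rk l" by auto
  then show ?thesis
  proof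
    assume h: "rk r < rk l"
    then have "lab r < lab l" using m l r unfolding monoS_def by auto
    then show ?thesis using h unfolding mc_def by simp
  next
    assume "rk r = rk l" then have "l = r" using i l r unfolding inj_on_def by auto
    then show ?thesis unfolding mc_def by simp
  qed
qed

lemma rk_inj_on: "distinct (leaves T) \<Longrightarrow> inj_on rk (subtrees T)"
  unfolding inj_on_def using rk_inj by blast

definition L :: "btree \<Rightarrow> btree \<Rightarrow> nat" where
  "L T u = (if u \<in> subtrees T then Suc (card {w \<in> subtrees T. rk w < rk u}) else 0)"

lemma L_mono: "monoS (subtrees T) (L T)"
  unfolding monoS_def
proof (intro ballI impI)
  fix x y assume x: "x \<in> subtrees T" and y: "y \<in> subtrees T" and lt: "rk x < rk y"
  have "{w \<in> subtrees T. rk w < rk x} \<subset> {w \<in> subtrees T. rk w < rk y}"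
    using lt x by auto
  then have "card {w \<in> subtrees T. rk w < rk x} < card {w \<in> subtrees T. rk w < rk y}"
    using finite_subtrees by (intro psubset_card_mono) auto
  then show "L T x < L T y" unfolding L_def using x y by simp
qed

lemma Min_children: "Min (lab ` children (Node l r)) = min (lab l) (lab r)"
  by simp

lemma L_bu:
  assumes bp: "binary_phylo n T"
  shows "is_bottom_up T (L T)"
proof -
  let ?S = "subtrees T"
  have d: "distinct (leaves T)" and sl: "set (leaves T) = {1..n}" using bp unfolding binary_phylo_def by auto
  have i: "inj_on rk ?S" by (rule rk_inj_on[OF d])
  have m: "monoS ?S (L T)" by (rule L_mono)
  have inj: "inj_on (L T) ?S"
  proof (rule inj_onI)
    fix x y assume x: "x \<in> ?S" and y: "y \<in> ?S" and eq: "L T x = L T y"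
    show "x = y"
    proof (rule ccontr)
      assume "x \<noteq> y"
      then have "rk x \<noteq> rk y" using i x y unfolding inj_on_def by auto
      then have "rk x < rk y \<or> rk y < rk x" by auto
      then show False using m x y eq unfolding monoS_def by (metis less_irrefl)
    qed
  qed
  have rng: "L T ` ?S \<subseteq> {1..card ?S}"
  proof
    fix k assume "k \<in> L T ` ?S"
    then obtain u where u: "u \<in> ?S" "k = L T u" by auto
    have "{w \<in> ?S. rk w < rk u} \<subset> ?S" using u by auto
    then have "card {w \<in> ?S. rk w < rk u} < card ?S" using finite_subtrees by (rule psubset_card_mono[rotated])
    then show "k \<in> {1..card ?S}" using u unfolding L_def by auto
  qed
  have outside: "\<forall>x. x \<notin> ?S \<longrightarrow> L T x = 0" unfolding L_def by auto
  have leaf: "L T (Leaf a) = a" if a: "Leaf a \<in> ?S" for a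
  proof -
    have aT: "a \<in> {1..n}" using a Leaf_in_subtrees sl by auto
    have "{w \<in> ?S. rk w < rk (Leaf a)} = Leaf ` {1..<a}"
    proof
      show "{w \<in> ?S. rk w < rk (Leaf a)} \<subseteq> Leaf ` {1..<a}"
      proof
        fix w assume w: "w \<in> {w \<in> ?S. rk w < rk (Leaf a)}"
        then have "height w \<le> 0" using rk_less_height[of w "Leaf a"] by simp
        then obtain b where b: "w = Leaf b" by (cases w) auto
        then have "b < a" using w by simp
        moreover have "b \<in> {1..n}" using w b Leaf_in_subtrees sl by auto
        ultimately show "w \<in> Leaf ` {1..<a}" using b by auto
      qed
      show "Leaf ` {1..<a} \<subseteq> {w \<in> ?S. rk w < rk (Leaf a)}"
      proof
        fix w assume "w \<in> Leaf ` {1..<a}"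
        then obtain b where b: "w = Leaf b" "b \<in> {1..<a}" by auto
        then have "b \<in> set (leaves T)" using sl aT by auto
        then show "w \<in> {w \<in> ?S. rk w < rk (Leaf a)}" using b Leaf_in_subtrees by auto
      qed
    qed
    moreover have "card (Leaf ` {1..<a}) = a - 1"
    proof -
      have "inj_on Leaf {1..<a}" by (auto simp: inj_on_def)
      then show ?thesis by (simp add: card_image)
    qed
    ultimately show ?thesis using a aT unfolding L_def by simp
  qed
  have hb: "\<forall>u\<in>?S. \<forall>v\<in>?S. height u < height v \<longrightarrow> L T u < L T v"
    using m rk_height_less unfolding monoS_def by blast
  have hc: "\<forall>u\<in>?S. \<forall>v\<in>?S. 0 < height u \<and> height u = height v \<and>
        Min (L T ` children u) < Min (L T ` children v) \<longrightarrow> L T u < L T v"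
  proof (intro ballI impI)
    fix u v assume u: "u \<in> ?S" and v: "v \<in> ?S"
      and h: "0 < height u \<and> height u = height v \<and> Min (L T ` children u) < Min (L T ` children v)"
    obtain l r where ulr: "u = Node l r" using h by (cases u) auto
    obtain l' r' where vlr: "v = Node l' r'" using h by (cases v) auto
    have ch: "l \<in> ?S" "r \<in> ?S" "l' \<in> ?S" "r' \<in> ?S"
      using children_sub[OF u] children_sub[OF v] ulr vlr by auto
    have mcs: "mc l r \<in> ?S" "mc l' r' \<in> ?S" using ch unfolding mc_def by auto
    have "L T (mc l r) < L T (mc l' r')"
      using h ulr vlr min_lab[OF m i ch(1,2)] min_lab[OF m i ch(3,4)] by simp
    then have "rk (mc l r) < rk (mc l' r')" using mono_rev[OF m i mcs] by blast
    then have "rk u < rk v" using h ulr vlr rk_mc[of l r] rk_mc[of l' r'] by simp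
    then show "L T u < L T v" using m u v unfolding monoS_def by auto
  qed
  show ?thesis unfolding is_bottom_up_def
    using inj rng outside leaf hb hc by blast
qed

lemma bu_mono:
  assumes d: "distinct (leaves T)" and bu: "is_bottom_up T lab"
  shows "monoS (subtrees T) lab"
proof -
  let ?S = "subtrees T"
  have i: "inj_on rk ?S" by (rule rk_inj_on[OF d])
  have leaf: "\<And>a. Leaf a \<in> ?S \<Longrightarrow> lab (Leaf a) = a"
    and hb: "\<And>u v. u \<in> ?S \<Longrightarrow> v \<in> ?S \<Longrightarrow> height u < height v \<Longrightarrow> lab u < lab v"
    and hc: "\<And>u v. u \<in> ?S \<Longrightarrow> v \<in> ?S \<Longrightarrow> 0 < height u \<Longrightarrow> height u = height v \<Longrightarrow>
        Min (lab ` children u) < Min (lab ` children v) \<Longrightarrow> lab u < lab v"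
    using bu unfolding is_bottom_up_def by blast+
  have "\<forall>u v. height u + height v = k \<longrightarrow> u \<in> ?S \<longrightarrow> v \<in> ?S \<longrightarrow> rk u < rk v \<longrightarrow> lab u < lab v" for k
  proof (induction k rule: less_induct)
    case (less k)
    show ?case
    proof (intro allI impI)
      fix u v assume k: "height u + height v = k" and u: "u \<in> ?S" and v: "v \<in> ?S" and lt: "rk u < rk v"
      have hle: "height u \<le> height v" using rk_less_height[OF lt] .
      show "lab u < lab v"
      proof (cases "height u < height v")
        case True then show ?thesis using hb u v by blast
      next
        case False
        then have heq: "height u = height v" using hle by simp
        show ?thesis
        proof (cases "height u = 0")
          case True
          then obtain a where a: "u = Leaf a" by (cases u) auto
          obtain b where b: "v = Leaf b" using True heq by (cases v) auto
          have "a < b" using lt a b by simp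
          then show ?thesis using leaf u v a b by simp
        next
          case False
          obtain l r where ulr: "u = Node l r" using False by (cases u) auto
          obtain l' r' where vlr: "v = Node l' r'" using False heq by (cases v) auto
          have ch: "l \<in> ?S" "r \<in> ?S" "l' \<in> ?S" "r' \<in> ?S"
            using children_sub[OF u] children_sub[OF v] ulr vlr by auto
          let ?X = "{l, r, l', r'}"
          have X: "?X \<subseteq> ?S" using ch by auto
          have iX: "inj_on rk ?X" using inj_on_subset[OF i X] .
          have hx: "height x < height u" if "x \<in> ?X" for x
            using that ulr vlr heq by auto
          have mX: "monoS ?X lab" unfolding monoS_def
          proof (intro ballI impI)
            fix x y assume x: "x \<in> ?X" and y: "y \<in> ?X" and xy: "rk x < rk y"
            have "height x + height y < k" using hx[OF x] hx[OF y] k heq by simp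
            then show "lab x < lab y" using less.IH x y X xy by blast
          qed
          have ru: "rk u = height u # min (rk l) (rk r)" using ulr by simp
          have rv: "rk v = height v # min (rk l') (rk r')" using vlr by simp
          have "min (rk l) (rk r) < min (rk l') (rk r')" using lt ru rv heq by (metis Cons_less_Cons less_irrefl)
          then have "rk (mc l r) < rk (mc l' r')" by (simp add: rk_mc)
          moreover have "mc l r \<in> ?X" "mc l' r' \<in> ?X" unfolding mc_def by auto
          ultimately have "lab (mc l r) < lab (mc l' r')" using mX unfolding monoS_def by blast
          then have "Min (lab ` children u) < Min (lab ` children v)"
            using ulr vlr min_lab[OF mX iX, of l r] min_lab[OF mX iX, of l' r'] by simp
          then show ?thesis using hc[OF u v] False heq by simp
        qed
      qed
    qed
  qed
  then show ?thesis unfolding monoS_def by blast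
qed

lemma bu_image:
  assumes bu: "is_bottom_up T lab"
  shows "lab ` subtrees T = {1..card (subtrees T)}"
proof -
  have inj: "inj_on lab (subtrees T)" and sub: "lab ` subtrees T \<subseteq> {1..card (subtrees T)}"
    using bu unfolding is_bottom_up_def by auto
  have "card (lab ` subtrees T) = card {1..card (subtrees T)}" using card_image[OF inj] by simp
  then show ?thesis using card_subset_eq[OF _ sub] by simp
qed

lemma bu_unique:
  assumes bp: "binary_phylo n T" and bu: "is_bottom_up T lab"
  shows "lab = L T"
proof
  fix u
  let ?S = "subtrees T"
  have d: "distinct (leaves T)" using bp unfolding binary_phylo_def by auto
  have i: "inj_on rk ?S" by (rule rk_inj_on[OF d])
  have m: "monoS ?S lab" by (rule bu_mono[OF d bu])
  have inj: "inj_on lab ?S" and out: "\<forall>x. x \<notin> ?S \<longrightarrow> lab x = 0"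
    using bu unfolding is_bottom_up_def by auto
  have img: "lab ` ?S = {1..card ?S}" by (rule bu_image[OF bu])
  show "lab u = L T u"
  proof (cases "u \<in> ?S")
    case False then show ?thesis using out unfolding L_def by auto
  next
    case True
    have lu: "lab u \<in> {1..card ?S}" using img True by auto
    have "lab ` {w \<in> ?S. lab w < lab u} = {1..<lab u}"
    proof
      show "lab ` {w \<in> ?S. lab w < lab u} \<subseteq> {1..<lab u}" using img by auto
      show "{1..<lab u} \<subseteq> lab ` {w \<in> ?S. lab w < lab u}"
      proof
        fix k assume k: "k \<in> {1..<lab u}"
        then have "k \<in> lab ` ?S" using img lu by auto
        then show "k \<in> lab ` {w \<in> ?S. lab w < lab u}" using k by auto
      qed
    qed
    moreover have "inj_on lab {w \<in> ?S. lab w < lab u}" using inj by (rule inj_on_subset) auto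
    ultimately have c: "card {w \<in> ?S. lab w < lab u} = lab u - 1" using card_image by fastforce
    have "{w \<in> ?S. lab w < lab u} = {w \<in> ?S. rk w < rk u}"
      using mono_rev[OF m i _ True] m True unfolding monoS_def by auto
    then show ?thesis using c lu True unfolding L_def by auto
  qed
qed

lemma bottom_up_eq:
  assumes bp: "binary_phylo n T"
  shows "bottom_up T = L T" "is_bottom_up T (bottom_up T)"
proof -
  have "\<exists>!lab. is_bottom_up T lab" using L_bu[OF bp] bu_unique[OF bp] by blast
  then have "is_bottom_up T (bottom_up T)" unfolding bottom_up_def by (rule theI')
  then show "bottom_up T = L T" "is_bottom_up T (bottom_up T)" using bu_unique[OF bp] by auto
qed

lemma distinct_sub: "distinct (leaves t) \<Longrightarrow> u \<in> subtrees t \<Longrightarrow> distinct (leaves u)"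
  by (induction t) auto

lemma matching_props:
  assumes bp: "binary_phylo n T"
  shows "\<forall>e\<in>matching T. \<exists>x y. x \<noteq> y \<and> e = {x, y}"
    "\<forall>e1\<in>matching T. \<forall>e2\<in>matching T. e1 \<noteq> e2 \<longrightarrow> e1 \<inter> e2 = {}"
    "\<Union>(matching T) = {1..2*n-2}"
    "finite (matching T)"
proof -
  let ?S = "subtrees T"
  let ?lab = "bottom_up T"
  have d: "distinct (leaves T)" and sl: "set (leaves T) = {1..n}" using bp unfolding binary_phylo_def by auto
  have bu: "is_bottom_up T ?lab" using bottom_up_eq[OF bp] by simp
  have inj: "inj_on ?lab ?S" using bu unfolding is_bottom_up_def by auto
  have hb: "\<And>u v. u \<in> ?S \<Longrightarrow> v \<in> ?S \<Longrightarrow> height u < height v \<Longrightarrow> ?lab u < ?lab v"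
    using bu unfolding is_bottom_up_def by blast
  have img: "?lab ` ?S = {1..card ?S}" by (rule bu_image[OF bu])
  have lenn: "length (leaves T) = n" using distinct_card[OF d] sl by simp
  have N: "card ?S = 2*n - 1" using card_subtrees[OF d] lenn by simp
  have TS: "T \<in> ?S" by (rule subtrees_self)
  have labT: "?lab T = card ?S"
  proof -
    have "?S \<noteq> {}" using TS by auto
    then have "card ?S \<ge> 1" using finite_subtrees by (simp add: Suc_le_eq card_gt_0_iff)
    then have "card ?S \<in> ?lab ` ?S" using img by simp
    then obtain w where w: "w \<in> ?S" "?lab w = card ?S" by auto
    have "?lab T \<le> card ?S" using img TS by auto
    moreover have "w = T"
    proof (rule ccontr)
      assume "w \<noteq> T"
      then have "?lab w < ?lab T" using hb[OF w(1) TS] height_lt[OF w(1)] by auto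
      then show False using w \<open>?lab T \<le> card ?S\<close> by simp
    qed
    ultimately show ?thesis using w by simp
  qed
  have M: "matching T = (\<lambda>u. ?lab ` children u) ` {u \<in> ?S. \<not> is_leaf u}"
    unfolding matching_def by auto
  show "finite (matching T)" unfolding M using finite_subtrees by simp
  show "\<forall>e\<in>matching T. \<exists>x y. x \<noteq> y \<and> e = {x, y}"
  proof
    fix e assume "e \<in> matching T"
    then obtain u where u: "u \<in> ?S" "\<not> is_leaf u" "e = ?lab ` children u" unfolding M by auto
    then obtain l r where ulr: "u = Node l r" by (cases u) auto
    have du: "distinct (leaves u)" using distinct_sub[OF d u(1)] .
    have "l \<noteq> r" using subtrees_disj[of l r] du ulr subtrees_self[of l] by auto
    moreover have "l \<in> ?S" "r \<in> ?S" using children_sub[OF u(1)] ulr by auto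
    ultimately have "?lab l \<noteq> ?lab r" using inj unfolding inj_on_def by auto
    then show "\<exists>x y. x \<noteq> y \<and> e = {x, y}" using u ulr by auto
  qed
  show "\<forall>e1\<in>matching T. \<forall>e2\<in>matching T. e1 \<noteq> e2 \<longrightarrow> e1 \<inter> e2 = {}"
  proof (intro ballI impI)
    fix e1 e2 assume "e1 \<in> matching T" "e2 \<in> matching T" and ne: "e1 \<noteq> e2"
    then obtain u1 u2 where u: "u1 \<in> ?S" "e1 = ?lab ` children u1" "u2 \<in> ?S" "e2 = ?lab ` children u2"
      unfolding M by auto
    then have "u1 \<noteq> u2" using ne by auto
    then have "children u1 \<inter> children u2 = {}" using children_disj[OF d u(1) u(3)] by simp
    then show "e1 \<inter> e2 = {}"
      using inj_on_image_Int[OF inj children_sub[OF u(1)] children_sub[OF u(3)]] u by simp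
  qed
  have "\<Union>(matching T) = ?lab ` (\<Union>u\<in>?S. children u)"
  proof -
    have "\<Union>(matching T) = (\<Union>u\<in>{u \<in> ?S. \<not> is_leaf u}. ?lab ` children u)" unfolding M by simp
    also have "\<dots> = (\<Union>u\<in>?S. ?lab ` children u)"
    proof -
      have "?lab ` children u = {}" if "is_leaf u" for u using that by (cases u) auto
      then show ?thesis by blast
    qed
    finally show ?thesis by auto
  qed
  also have "\<dots> = ?lab ` (?S - {T})" using children_union[of T] by simp
  also have "\<dots> = ?lab ` ?S - {?lab T}" using inj_on_image_set_diff[OF inj] TS by auto
  also have "\<dots> = {1..2*n-2}" using img labT N by auto
  finally show "\<Union>(matching T) = {1..2*n-2}" .
qed

lemma kappa_pair: "a \<noteq> b \<Longrightarrow> kappa {a, b} = transpose a b"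
proof (cases "a < b")
  case True
  then have "sorted_list_of_set {a, b} = [a, b]" by (simp add: sorted_list_of_set_insert)
  then show ?thesis unfolding kappa_def by simp
next
  case False
  assume "a \<noteq> b"
  then have "b < a" using False by simp
  then have "sorted_list_of_set {a, b} = [b, a]"
    by (simp add: sorted_list_of_set_insert insert_commute)
  then show ?thesis unfolding kappa_def by (simp add: transpose_commute)
qed

lemma transpose_disj_commute:
  "{a,b} \<inter> {c,d} = {} \<Longrightarrow> transpose a b \<circ> transpose c d = transpose c d \<circ> transpose a b"
  by (auto simp: fun_eq_iff transpose_def)

definition kstep :: "nat set \<Rightarrow> (nat \<Rightarrow> nat) \<Rightarrow> (nat \<Rightarrow> nat)" where
  "kstep S p = kappa S \<circ> p"

lemma kstep_eq: "(\<lambda>S p. kappa S \<circ> p) = kstep"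
  by (simp add: fun_eq_iff kstep_def)

lemma fold_perm:
  fixes M :: "nat set set"
  assumes fM: "finite M" and pairs: "\<forall>e\<in>M. \<exists>x y. x \<noteq> y \<and> e = {x, y}"
    and disj: "\<forall>e1\<in>M. \<forall>e2\<in>M. e1 \<noteq> e2 \<longrightarrow> e1 \<inter> e2 = {}"
  shows "N \<subseteq> M \<Longrightarrow> (\<forall>e\<in>N. \<forall>x y. e = {x, y} \<longrightarrow> Finite_Set.fold kstep id N x = y)
      \<and> (\<forall>x. x \<notin> \<Union>N \<longrightarrow> Finite_Set.fold kstep id N x = x)"
proof -
  assume NM: "N \<subseteq> M"
  have cf: "comp_fun_commute_on M kstep"
  proof
    fix e1 e2 assume e: "e1 \<in> M" "e2 \<in> M"
    obtain a b where ab: "a \<noteq> b" "e1 = {a,b}" using pairs e by blast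
    obtain c d where cd: "c \<noteq> d" "e2 = {c,d}" using pairs e by blast
    have "kappa e2 \<circ> kappa e1 = kappa e1 \<circ> kappa e2"
    proof (cases "e1 = e2")
      case True then show ?thesis by simp
    next
      case False
      then have "{a,b} \<inter> {c,d} = {}" using disj e ab cd by auto
      then show ?thesis using ab cd kappa_pair transpose_disj_commute by metis
    qed
    then show "kstep e2 \<circ> kstep e1 = kstep e1 \<circ> kstep e2"
      by (simp add: fun_eq_iff kstep_def)
  qed
  have fN: "finite N" using NM fM finite_subset by auto
  show ?thesis using fN NM
  proof (induction N rule: finite_induct)
    case empty then show ?case by simp
  next
    case (insert e N)
    have eq: "Finite_Set.fold kstep id (insert e N) = kappa e \<circ> Finite_Set.fold kstep id N"
      unfolding comp_fun_commute_on.fold_insert[OF cf insert.prems insert.hyps(1,2)] kstep_def ..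
    have NM': "N \<subseteq> M" using insert.prems by blast
    have IH1: "\<forall>e'\<in>N. \<forall>x y. e' = {x, y} \<longrightarrow> Finite_Set.fold kstep id N x = y"
      and IH2: "\<forall>x. x \<notin> \<Union>N \<longrightarrow> Finite_Set.fold kstep id N x = x" using insert.IH[OF NM'] by blast+
    have eM: "e \<in> M" using insert.prems by simp
    obtain a b where ab: "a \<noteq> b" "e = {a,b}" using pairs eM by blast
    have ke: "kappa e = transpose a b" using kappa_pair[OF ab(1)] ab(2) by simp
    have de: "e' \<inter> e = {}" if "e' \<in> N" for e'
    proof -
      have "e' \<in> M" "e' \<noteq> e" using that NM' insert.hyps(2) by auto
      then show ?thesis using disj eM by blast
    qed
    show ?case
    proof (intro conjI allI ballI impI)
      fix e' x y assume e': "e' \<in> insert e N" and xy: "e' = {x, y}"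
      show "Finite_Set.fold kstep id (insert e N) x = y"
      proof (cases "e' = e")
        case True
        then have "x \<notin> \<Union>N" using de xy by auto
        then have "Finite_Set.fold kstep id N x = x" using IH2 by blast
        moreover have "transpose a b x = y" using True xy ab by (auto simp: transpose_def doubleton_eq_iff)
        ultimately show ?thesis using eq ke by simp
      next
        case False
        then have e'N: "e' \<in> N" using e' by auto
        then have "Finite_Set.fold kstep id N x = y" using IH1 xy by blast
        moreover have "y \<notin> e" using de[OF e'N] xy by auto
        ultimately show ?thesis using eq ke ab by simp
      qed
    next
      fix x assume x: "x \<notin> \<Union>(insert e N)"
      then have "Finite_Set.fold kstep id N x = x" using IH2 by blast
      then show "Finite_Set.fold kstep id (insert e N) x = x" using eq ke ab x by simp
    qed
  qed
qed

lemma perm_props: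
  assumes bp: "binary_phylo n T"
  defines "V \<equiv> {1..2*n-2}" and "s \<equiv> matching_perm T"
  shows "invol V s" "\<forall>x\<in>V. {x, s x} \<in> matching T"
    "\<forall>e\<in>matching T. \<forall>x\<in>e. \<forall>y\<in>e. y = x \<or> y = s x"
proof -
  let ?M = "matching T"
  note mp = matching_props[OF bp]
  have sdef: "s = Finite_Set.fold kstep id ?M"
    unfolding s_def matching_perm_def kstep_eq ..
  have P: "(\<forall>e\<in>?M. \<forall>x y. e = {x, y} \<longrightarrow> s x = y) \<and> (\<forall>x. x \<notin> \<Union>?M \<longrightarrow> s x = x)"
    unfolding sdef by (rule fold_perm[OF mp(4) mp(1) mp(2) subset_refl])
  have P1: "\<And>e x y. e \<in> ?M \<Longrightarrow> e = {x, y} \<Longrightarrow> s x = y" using P by blast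
  have P2: "\<And>x. x \<notin> V \<Longrightarrow> s x = x" using P mp(3) unfolding V_def by blast
  have UV: "\<Union>?M = V" using mp(3) unfolding V_def .
  have inV: "\<exists>y. x \<noteq> y \<and> {x, y} \<in> ?M \<and> s x = y \<and> s y = x" if x: "x \<in> V" for x
  proof -
    obtain e where e: "e \<in> ?M" "x \<in> e" using x UV by auto
    obtain a b where ab: "a \<noteq> b" "e = {a,b}" using mp(1) e by blast
    define y where "y = (if x = a then b else a)"
    have y: "e = {x, y}" "x \<noteq> y" using ab e unfolding y_def by auto
    have "s x = y" using P1 e y by blast
    moreover have "e = {y, x}" using y by auto
    then have "s y = x" using P1 e by blast
    ultimately show ?thesis using y e by auto
  qed
  show "invol V s" unfolding invol_def
  proof (intro conjI allI ballI impI)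
    fix x show "s (s x) = x"
    proof (cases "x \<in> V")
      case True then show ?thesis using inV by auto
    next
      case False then show ?thesis using P2 by simp
    qed
  next
    fix x assume x: "x \<in> V"
    then obtain y where y: "x \<noteq> y" "{x, y} \<in> ?M" "s x = y" using inV by blast
    then show "s x \<noteq> x" by simp
    show "s x \<in> V" using y UV by auto
  next
    fix x assume "x \<notin> V" then show "s x = x" using P2 by simp
  qed
  show "\<forall>x\<in>V. {x, s x} \<in> matching T" using inV by auto
  show "\<forall>e\<in>matching T. \<forall>x\<in>e. \<forall>y\<in>e. y = x \<or> y = s x"
  proof (intro ballI)
    fix e x y assume e: "e \<in> ?M" and x: "x \<in> e" and y: "y \<in> e"
    obtain a b where ab: "a \<noteq> b" "e = {a,b}" using mp(1) e by blast
    show "y = x \<or> y = s x"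
    proof (cases "y = x")
      case False
      then have "e = {x, y}" using ab x y by auto
      then show ?thesis using P1 e by blast
    qed simp
  qed
qed

theorem proposition5:
  fixes n :: nat and T1 T2 :: btree
  assumes "binary_phylo n T1" and "binary_phylo n T2"
  shows "TD n T1 T2 = real n - 1 - real (card (components n T1 T2))"
proof -
  define V where "V = {1..2*n-2}"
  define s1 where "s1 = matching_perm T1"
  define s2 where "s2 = matching_perm T2"
  have i1: "invol V s1" and e1: "\<forall>x\<in>V. {x, s1 x} \<in> matching T1"
    and f1: "\<forall>e\<in>matching T1. \<forall>x\<in>e. \<forall>y\<in>e. y = x \<or> y = s1 x"
    using perm_props[OF assms(1)] unfolding V_def s1_def by auto
  have i2: "invol V s2" and e2: "\<forall>x\<in>V. {x, s2 x} \<in> matching T2"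
    and f2: "\<forall>e\<in>matching T2. \<forall>x\<in>e. \<forall>y\<in>e. y = x \<or> y = s2 x"
    using perm_props[OF assms(2)] unfolding V_def s2_def by auto
  have U1: "\<Union>(matching T1) = V" and U2: "\<Union>(matching T2) = V"
    using matching_props(3)[OF assms(1)] matching_props(3)[OF assms(2)] unfolding V_def by auto
  have fV: "finite V" unfolding V_def by simp
  have cV: "card V = 2*n-2" unfolding V_def by simp
  have n1: "n \<ge> 1"
  proof -
    have "set (leaves T1) = {1..n}" using assms(1) unfolding binary_phylo_def by auto
    then show ?thesis using leaves_ne[of T1] by (cases n) auto
  qed
  let ?G = "Gr V s1 s2"
  have sub1: "?G \<subseteq> graph_edges T1 T2"
  proof
    fix p assume "p \<in> ?G"
    then obtain x y where p: "p = (x,y)" "x \<in> V" "y = s1 x \<or> y = s2 x" unfolding Gr_def by auto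
    then show "p \<in> graph_edges T1 T2" using e1 e2 unfolding graph_edges_def by blast
  qed
  have sub2: "graph_edges T1 T2 \<subseteq> ?G\<^sup>="
  proof
    fix p assume "p \<in> graph_edges T1 T2"
    then obtain x y e where p: "p = (x,y)" "e \<in> matching T1 \<union> matching T2" "x \<in> e" "y \<in> e"
      unfolding graph_edges_def by auto
    then have "x \<in> V" using U1 U2 by auto
    moreover have "y = x \<or> y = s1 x \<or> y = s2 x" using p f1 f2 by blast
    ultimately show "p \<in> ?G\<^sup>=" using p unfolding Gr_def by auto
  qed
  have ge: "(graph_edges T1 T2)\<^sup>* = ?G\<^sup>*"
  proof
    show "(graph_edges T1 T2)\<^sup>* \<subseteq> ?G\<^sup>*" using rtrancl_mono[OF sub2] by simp
    show "?G\<^sup>* \<subseteq> (graph_edges T1 T2)\<^sup>*" using rtrancl_mono[OF sub1] .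
  qed
  have comps: "components n T1 T2 = cls ?G V"
    unfolding components_def cls_def V_def[symmetric] ge ..
  have inv2: "inv s2 = s2"
  proof (rule inv_unique_comp)
    show "s2 \<circ> s2 = id" using invol_simps(1)[OF i2] by (auto simp: fun_eq_iff)
    show "s2 \<circ> s2 = id" using invol_simps(1)[OF i2] by (auto simp: fun_eq_iff)
  qed
  define P where "P k \<longleftrightarrow> (\<exists>ts :: (nat \<Rightarrow> nat) list. length ts = k \<and> valid_ts V ts \<and>
      foldr (\<circ>) ts id = s2 \<circ> s1)" for k
  have TDP: "TD' n T1 T2 = (LEAST k. P k)"
    unfolding TD'_def P_def valid_ts_def V_def s1_def[symmetric] s2_def[symmetric] inv2 ..
  let ?c = "card (cls ?G V)"
  obtain ts0 where ts0: "valid_ts V ts0" "foldr (\<circ>) ts0 id = s2 \<circ> s1"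
    "length ts0 + 2 * ?c \<le> card V" using upper_bound[OF fV i1 i2] by blast
  have P0: "P (length ts0)" unfolding P_def using ts0 by blast
  then have le: "(LEAST k. P k) \<le> length ts0" by (rule Least_le)
  have "P (LEAST k. P k)" using P0 by (rule LeastI)
  then obtain ts where ts: "length ts = (LEAST k. P k)" "valid_ts V ts" "foldr (\<circ>) ts id = s2 \<circ> s1"
    unfolding P_def by blast
  have ge2: "card V \<le> 2 * ?c + (LEAST k. P k)" using lower_bound[OF fV i1 i2 ts(2,3)] ts(1) by simp
  have K: "TD' n T1 T2 + 2 * ?c = 2 * n - 2" using le ge2 ts0(3) cV TDP by linarith
  have "real (TD' n T1 T2) = 2 * real n - 2 - 2 * real ?c" using K n1 by linarith
  then show ?thesis unfolding TD_def comps by simp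
qed

end
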